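(* Let $\kappa$ be a regular uncountable cardinal, $F$ a free filter on $\omega$, and $\mathbb{P}$ a finite support product of posets such that every finite subproduct is $\kappa$-$F$-Knaster. Then $\mathbb{P}$ is $\kappa$-$F$-Knaster. In particular, when $F$ is an ultrafilter, any finite support product of $\kappa$-$F$-Knaster posets is $\kappa$-$F$-Knaster; likewise any finite support product of $\kappa$-uf-Knaster posets is $\kappa$-uf-Knaster.
   Context: A filter $F$ on $\omega$ is free if it contains all cofinite subsets; $F^+$ is the family of sets meeting every member of $F$. For a poset $\mathbb{P}$ and $\bar p=\langle p_n:n<\omega\rangle$ in $\mathbb{P}$, $\dot W(\bar p)$ names $\{n:p_n\in\dot G\}$. $Q\subseteq\mathbb{P}$ is $F$-linked if for every sequence $\bar p$ in $Q$ some $q\in\mathbb{P}$ forces $\dot W(\bar p)\in F^+$; uf-linked if it is $D$-linked for every non-principal ultrafilter $D$ on $\omega$. $\mathbb{P}$ is $\kappa$-$F$-Knaster (resp. $\kappa$-uf-Knaster) if every subset of size $\kappa$ contains an $F$-linked (resp. uf-linked) subset of size $\kappa$. *)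

theory Defs
  imports Main
begin

unbundle cardinal_syntax

text \<open>A forcing poset: a set P with a partial order le (le p q means p is stronger than q)
  and a maximum element one.\<close>
definition is_poset :: "'p set \<Rightarrow> ('p \<Rightarrow> 'p \<Rightarrow> bool) \<Rightarrow> 'p \<Rightarrow> bool" where
  "is_poset P le one \<longleftrightarrow> one \<in> P
     \<and> (\<forall>p\<in>P. le p p)
     \<and> (\<forall>p\<in>P. \<forall>q\<in>P. le p q \<and> le q p \<longrightarrow> p = q)
     \<and> (\<forall>p\<in>P. \<forall>q\<in>P. \<forall>r\<in>P. le p q \<and> le q r \<longrightarrow> le p r)
     \<and> (\<forall>p\<in>P. le p one)"

definition compatible :: "'p set \<Rightarrow> ('p \<Rightarrow> 'p \<Rightarrow> bool) \<Rightarrow> 'p \<Rightarrow> 'p \<Rightarrow> bool" where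
  "compatible P le p q \<longleftrightarrow> (\<exists>r\<in>P. le r p \<and> le r q)"

definition positive :: "nat filter \<Rightarrow> nat set \<Rightarrow> bool" where
  "positive F W \<longleftrightarrow> (\<forall>A. eventually (\<lambda>n. n \<in> A) F \<longrightarrow> W \<inter> A \<noteq> {})"

text \<open>q forces that W(pbar) = {n. pbar n \<in> G} is F-positive, written out combinatorially:
  for each A in F (a ground-model set), the set of conditions below some pbar n with n in A
  is dense below q.\<close>
definition forces_positive ::
  "'p set \<Rightarrow> ('p \<Rightarrow> 'p \<Rightarrow> bool) \<Rightarrow> nat filter \<Rightarrow> (nat \<Rightarrow> 'p) \<Rightarrow> 'p \<Rightarrow> bool" where
  "forces_positive P le F pbar q \<longleftrightarrow>
     (\<forall>A. eventually (\<lambda>n. n \<in> A) F \<longrightarrow>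
        (\<forall>r\<in>P. le r q \<longrightarrow> (\<exists>n\<in>A. compatible P le r (pbar n))))"

definition F_linked :: "'p set \<Rightarrow> ('p \<Rightarrow> 'p \<Rightarrow> bool) \<Rightarrow> nat filter \<Rightarrow> 'p set \<Rightarrow> bool" where
  "F_linked P le F Q \<longleftrightarrow> Q \<subseteq> P \<and>
     (\<forall>pbar. (\<forall>n. pbar n \<in> Q) \<longrightarrow> (\<exists>q\<in>P. forces_positive P le F pbar q))"

definition nonprincipal_ultrafilter :: "nat filter \<Rightarrow> bool" where
  "nonprincipal_ultrafilter D \<longleftrightarrow> D \<noteq> bot
     \<and> (\<forall>A. eventually (\<lambda>n. n \<in> A) D \<or> eventually (\<lambda>n. n \<notin> A) D)
     \<and> (\<forall>n. \<not> eventually (\<lambda>m. m = n) D)"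

definition uf_linked :: "'p set \<Rightarrow> ('p \<Rightarrow> 'p \<Rightarrow> bool) \<Rightarrow> 'p set \<Rightarrow> bool" where
  "uf_linked P le Q \<longleftrightarrow> (\<forall>D. nonprincipal_ultrafilter D \<longrightarrow> F_linked P le D Q)"

definition F_Knaster :: "'k rel \<Rightarrow> 'p set \<Rightarrow> ('p \<Rightarrow> 'p \<Rightarrow> bool) \<Rightarrow> nat filter \<Rightarrow> bool" where
  "F_Knaster \<kappa> P le F \<longleftrightarrow>
     (\<forall>X. X \<subseteq> P \<and> |X| =o \<kappa> \<longrightarrow> (\<exists>Y. Y \<subseteq> X \<and> |Y| =o \<kappa> \<and> F_linked P le F Y))"

definition uf_Knaster :: "'k rel \<Rightarrow> 'p set \<Rightarrow> ('p \<Rightarrow> 'p \<Rightarrow> bool) \<Rightarrow> bool" where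
  "uf_Knaster \<kappa> P le \<longleftrightarrow>
     (\<forall>X. X \<subseteq> P \<and> |X| =o \<kappa> \<longrightarrow> (\<exists>Y. Y \<subseteq> X \<and> |Y| =o \<kappa> \<and> uf_linked P le Y))"

definition fs_prod :: "'i set \<Rightarrow> ('i \<Rightarrow> 'a set) \<Rightarrow> ('i \<Rightarrow> 'a) \<Rightarrow> ('i \<Rightarrow> 'a) set" where
  "fs_prod J P one = {p. (\<forall>i\<in>J. p i \<in> P i) \<and> (\<forall>i. i \<notin> J \<longrightarrow> p i = one i)
                          \<and> finite {i\<in>J. p i \<noteq> one i}}"

definition prod_le :: "'i set \<Rightarrow> ('i \<Rightarrow> 'a \<Rightarrow> 'a \<Rightarrow> bool) \<Rightarrow> ('i \<Rightarrow> 'a) \<Rightarrow> ('i \<Rightarrow> 'a) \<Rightarrow> bool" where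
  "prod_le J le p q \<longleftrightarrow> (\<forall>i\<in>J. le i (p i) (q i))"

end

theory Submission
  imports Defs
begin

lemma kap_cinf:
  assumes card: "Card_order \<kappa>" and unc: "natLeq <o \<kappa>"
  shows "Cinfinite \<kappa>"
proof -
  have "infinite (Field \<kappa>)"
  proof
    assume f: "finite (Field \<kappa>)"
    have "|Field \<kappa>| <o natLeq" using f finite_iff_ordLess_natLeq by blast
    moreover have "\<kappa> =o |Field \<kappa>|" using card_of_Field_ordIso[OF card] ordIso_symmetric by blast
    ultimately have "\<kappa> <o natLeq" using ordIso_ordLess_trans by blast
    then show False using unc not_ordLess_ordLeq ordLess_imp_ordLeq by blast
  qed
  then show ?thesis using card cinfinite_def by blast
qed

lemma kap_finite_small:
  assumes card: "Card_order \<kappa>" and unc: "natLeq <o \<kappa>" and "finite A"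
  shows "|A| <o \<kappa>"
  using assms finite_iff_ordLess_natLeq ordLess_transitive by blast

lemma kap_nat_small:
  assumes card: "Card_order \<kappa>" and unc: "natLeq <o \<kappa>"
  shows "|UNIV :: nat set| <o \<kappa>"
  using assms card_of_nat ordIso_ordLess_trans by blast

lemma kap_union_small:
  assumes card: "Card_order \<kappa>" and reg: "regularCard \<kappa>" and unc: "natLeq <o \<kappa>"
    and "|U| <o \<kappa>" and "\<forall>i\<in>U. |B i| <o \<kappa>"
  shows "|\<Union>i\<in>U. B i| <o \<kappa>"
  by (rule card_of_UNION_ordLess_infinite_Field_regularCard[OF reg kap_cinf[OF card unc] assms(4,5)])

lemma kap_big_subset:
  assumes card: "Card_order \<kappa>" and "\<kappa> \<le>o |S|"
  shows "\<exists>Y\<subseteq>S. |Y| =o \<kappa>"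
proof -
  have "|Field \<kappa>| \<le>o |S|" using card_of_Field_ordIso[OF card] assms(2) ordIso_ordLeq_trans by blast
  then obtain f where f: "inj_on f (Field \<kappa>)" "f ` Field \<kappa> \<subseteq> S"
    using card_of_ordLeq[of "Field \<kappa>" S] by auto
  have "|f ` Field \<kappa>| =o |Field \<kappa>|"
    using card_of_ordIso[of "Field \<kappa>" "f ` Field \<kappa>"] f(1) bij_betw_imageI ordIso_symmetric by blast
  then have "|f ` Field \<kappa>| =o \<kappa>" using card_of_Field_ordIso[OF card] ordIso_transitive by blast
  then show ?thesis using f(2) by blast
qed

lemma kap_not_small:
  assumes card: "Card_order \<kappa>" and "\<not> |S| <o \<kappa>"
  shows "\<kappa> \<le>o |S|"
  using assms not_ordLeq_iff_ordLess card_of_Well_order card_order_on_well_order_on by blast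

lemma kap_subset_iso:
  assumes card: "Card_order \<kappa>" and "|X| =o \<kappa>" and "S \<subseteq> X" and "\<not> |S| <o \<kappa>"
  shows "|S| =o \<kappa>"
proof -
  have "|S| \<le>o \<kappa>" using assms card_of_mono1 ordLeq_ordIso_trans by blast
  then show ?thesis using kap_not_small[OF card assms(4)] ordIso_iff_ordLeq by blast
qed

lemma kap_iso_not_small:
  assumes "|X| =o \<kappa>" shows "\<not> |X| <o \<kappa>"
  using assms not_ordLess_ordIso by blast


definition dsys :: "'x set \<Rightarrow> ('x \<Rightarrow> 'i set) \<Rightarrow> 'i set \<Rightarrow> bool" where
  "dsys Y A R \<longleftrightarrow> (\<forall>x\<in>Y. \<forall>y\<in>Y. x \<noteq> y \<longrightarrow> (A x - R) \<inter> (A y - R) = {})"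

lemma dsys_mono: "dsys Y A R \<Longrightarrow> Z \<subseteq> Y \<Longrightarrow> dsys Z A R"
  unfolding dsys_def by blast

lemma delta_n:
  assumes card: "Card_order \<kappa>" and reg: "regularCard \<kappa>" and unc: "natLeq <o \<kappa>"
  shows "\<And>X A. |X| =o \<kappa> \<Longrightarrow> \<forall>x\<in>X. finite (A x) \<and> card (A x) \<le> n \<Longrightarrow>
     \<exists>Y\<subseteq>X. |Y| =o \<kappa> \<and> (\<exists>R. finite R \<and> dsys Y A R)"
proof (induction n)
  case 0
  then have "\<forall>x\<in>X. A x = {}" by auto
  then show ?case using 0 unfolding dsys_def by blast
next
  case (Suc n)
  show ?case
  proof (cases "\<exists>i. \<not> |{x\<in>X. i \<in> A x}| <o \<kappa>")
    case True
    then obtain i where i: "\<not> |{x\<in>X. i \<in> A x}| <o \<kappa>" by blast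
    let ?X = "{x\<in>X. i \<in> A x}"
    have X': "|?X| =o \<kappa>" using kap_subset_iso[OF card Suc.prems(1) _ i] by blast
    have fin': "\<forall>x\<in>?X. finite (A x - {i}) \<and> card (A x - {i}) \<le> n"
    proof
      fix x assume x: "x \<in> ?X"
      then have f: "finite (A x)" "card (A x) \<le> Suc n" "i \<in> A x" using Suc.prems(2) by auto
      then have "card (A x - {i}) = card (A x) - 1" by (simp add: card_Diff_singleton)
      then show "finite (A x - {i}) \<and> card (A x - {i}) \<le> n" using f by simp
    qed
    then obtain Y R where Y: "Y \<subseteq> ?X" "|Y| =o \<kappa>" "finite R" "dsys Y (\<lambda>x. A x - {i}) R"
      using Suc.IH[OF X' fin'] by (elim exE conjE) blast
    have "dsys Y A (insert i R)" using Y(4) unfolding dsys_def by blast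
    then show ?thesis using Y by (intro exI[of _ Y]) auto
  next
    case False
    then have small: "\<forall>i. |{x\<in>X. i \<in> A x}| <o \<kappa>" by blast
    let ?C = "{Y. Y \<subseteq> X \<and> dsys Y A {}}"
    have "\<forall>C\<in>chains ?C. \<Union>C \<in> ?C"
    proof
      fix C assume C: "C \<in> chains ?C"
      have "\<Union>C \<subseteq> X" using chainsD2[OF C] by blast
      moreover have "dsys (\<Union>C) A {}"
        unfolding dsys_def
      proof (intro ballI impI)
        fix x y assume x: "x \<in> \<Union>C" and y: "y \<in> \<Union>C" and xy: "x \<noteq> y"
        then obtain Y1 Y2 where "Y1 \<in> C" "Y2 \<in> C" "x \<in> Y1" "y \<in> Y2" by blast
        then have "x \<in> Y1 \<and> y \<in> Y1 \<and> Y1 \<in> ?C \<or> x \<in> Y2 \<and> y \<in> Y2 \<and> Y2 \<in> ?C"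
          using chainsD[OF C] chainsD2[OF C] by blast
        then show "(A x - {}) \<inter> (A y - {}) = {}" using xy unfolding dsys_def by blast
      qed
      ultimately show "\<Union>C \<in> ?C" by blast
    qed
    then obtain M where M: "M \<in> ?C" and Mmax: "\<forall>Z\<in>?C. M \<subseteq> Z \<longrightarrow> Z = M"
      using Zorn_Lemma[of ?C] by blast
    have notsmall: "\<not> |M| <o \<kappa>"
    proof
      assume Ms: "|M| <o \<kappa>"
      let ?U = "\<Union>x\<in>M. A x"
      have "\<forall>x\<in>M. |A x| <o \<kappa>"
        using kap_finite_small[OF card unc] Suc.prems(2) M by blast
      then have Us: "|?U| <o \<kappa>"
        by (rule kap_union_small[OF card reg unc Ms])
      let ?B = "\<Union>i\<in>?U. {x\<in>X. i \<in> A x}"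
      have Bs: "|?B| <o \<kappa>"
        by (rule kap_union_small[OF card reg unc Us]) (simp add: small)
      have MBs: "|M \<union> ?B| <o \<kappa>"
        using card_of_Un_ordLess_infinite_Field[OF _ card Ms Bs] kap_cinf[OF card unc] cinfinite_def by blast
      have "\<not> X \<subseteq> M \<union> ?B"
      proof
        assume "X \<subseteq> M \<union> ?B"
        then have "|X| \<le>o |M \<union> ?B|" by (rule card_of_mono1)
        then have "|X| <o \<kappa>" using MBs ordLeq_ordLess_trans by blast
        then show False using Suc.prems(1) not_ordLess_ordIso by blast
      qed
      then obtain x where x: "x \<in> X" "x \<notin> M" "x \<notin> ?B" by blast
      have "insert x M \<in> ?C"
        using M x unfolding dsys_def by auto
      then have "insert x M = M" using Mmax by blast
      then show False using x by blast
    qed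
    obtain Y where Y: "Y \<subseteq> M" "|Y| =o \<kappa>"
      using kap_big_subset[OF card kap_not_small[OF card notsmall]] by blast
    have "dsys Y A {}" using dsys_mono M Y by blast
    then show ?thesis using Y M by (intro exI[of _ Y]) auto
  qed
qed

lemma delta_system:
  assumes card: "Card_order \<kappa>" and reg: "regularCard \<kappa>" and unc: "natLeq <o \<kappa>"
    and X: "|X| =o \<kappa>" and fin: "\<forall>x\<in>X. finite (A x)"
  shows "\<exists>Y\<subseteq>X. |Y| =o \<kappa> \<and> (\<exists>R. finite R \<and> dsys Y A R)"
proof -
  have "\<exists>n. \<not> |{x\<in>X. card (A x) = n}| <o \<kappa>"
  proof (rule ccontr)
    assume "\<not> ?thesis"
    then have "\<forall>n\<in>UNIV. |{x\<in>X. card (A x) = n}| <o \<kappa>" by blast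
    then have "|\<Union>n\<in>UNIV. {x\<in>X. card (A x) = n}| <o \<kappa>"
      by (rule kap_union_small[OF card reg unc kap_nat_small[OF card unc]])
    moreover have "(\<Union>n\<in>UNIV. {x\<in>X. card (A x) = n}) = X" by blast
    ultimately show False using X not_ordLess_ordIso by metis
  qed
  then obtain n where n: "\<not> |{x\<in>X. card (A x) = n}| <o \<kappa>" by blast
  have Xn: "|{x\<in>X. card (A x) = n}| =o \<kappa>" using kap_subset_iso[OF card X _ n] by blast
  obtain Y R where "Y \<subseteq> {x\<in>X. card (A x) = n}" "|Y| =o \<kappa>" "finite R" "dsys Y A R"
    using delta_n[OF card reg unc Xn, of A n] fin by auto
  then show ?thesis by blast
qed


definition Kn :: "nat filter set \<Rightarrow> 'k rel \<Rightarrow> 'p set \<Rightarrow> ('p \<Rightarrow> 'p \<Rightarrow> bool) \<Rightarrow> bool" where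
  "Kn FF \<kappa> P le \<longleftrightarrow> (\<forall>X. X \<subseteq> P \<and> |X| =o \<kappa> \<longrightarrow>
      (\<exists>Y. Y \<subseteq> X \<and> |Y| =o \<kappa> \<and> (\<forall>D\<in>FF. F_linked P le D Y)))"

lemma F_Knaster_Kn: "F_Knaster \<kappa> P le F = Kn {F} \<kappa> P le"
  unfolding F_Knaster_def Kn_def by simp

lemma uf_Knaster_Kn: "uf_Knaster \<kappa> P le = Kn {D. nonprincipal_ultrafilter D} \<kappa> P le"
  unfolding uf_Knaster_def Kn_def uf_linked_def by simp

lemma linked_mono: "F_linked P le D Q \<Longrightarrow> Q' \<subseteq> Q \<Longrightarrow> F_linked P le D Q'"
  unfolding F_linked_def by blast

lemma single_linked:
  assumes D: "D \<noteq> bot" and v: "v \<in> P" and refl: "\<forall>r\<in>P. le r r"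
  shows "F_linked P le D {v}"
  unfolding F_linked_def
proof (intro conjI allI impI)
  show "{v} \<subseteq> P" using v by blast
  fix pbar :: "nat \<Rightarrow> _" assume pb: "\<forall>n. pbar n \<in> {v}"
  show "\<exists>q\<in>P. forces_positive P le D pbar q"
  proof (intro bexI[of _ v] v)
    show "forces_positive P le D pbar v"
      unfolding forces_positive_def
    proof (intro allI impI ballI)
      fix A r assume A: "eventually (\<lambda>n. n \<in> A) D" and r: "r \<in> P" and rv: "le r v"
      obtain n where "n \<in> A" using eventually_happens[OF A] D by blast
      moreover have "compatible P le r (pbar n)"
        unfolding compatible_def using pb r rv refl by auto
      ultimately show "\<exists>n\<in>A. compatible P le r (pbar n)" by blast
    qed
  qed
qed

lemma K_lemma:
  assumes card: "Card_order \<kappa>" and reg: "regularCard \<kappa>" and unc: "natLeq <o \<kappa>"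
    and K: "Kn FF \<kappa> P le" and nb: "\<forall>D\<in>FF. D \<noteq> bot" and rfl: "\<forall>r\<in>P. le r r"
    and X: "|X| =o \<kappa>" and fX: "f ` X \<subseteq> P"
  shows "\<exists>Y\<subseteq>X. |Y| =o \<kappa> \<and> (\<forall>D\<in>FF. F_linked P le D (f ` Y))"
proof (cases "|f ` X| <o \<kappa>")
  case True
  have "\<exists>v\<in>f ` X. \<not> |{x\<in>X. f x = v}| <o \<kappa>"
  proof (rule ccontr)
    assume "\<not> ?thesis"
    then have "\<forall>v\<in>f ` X. |{x\<in>X. f x = v}| <o \<kappa>" by blast
    then have "|\<Union>v\<in>f ` X. {x\<in>X. f x = v}| <o \<kappa>"
      by (rule kap_union_small[OF card reg unc True])
    moreover have "(\<Union>v\<in>f ` X. {x\<in>X. f x = v}) = X" by blast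
    ultimately show False using X not_ordLess_ordIso by metis
  qed
  then obtain v where v: "v \<in> f ` X" "\<not> |{x\<in>X. f x = v}| <o \<kappa>" by blast
  let ?Y = "{x\<in>X. f x = v}"
  have Y: "|?Y| =o \<kappa>" using kap_subset_iso[OF card X _ v(2)] by blast
  have "?Y \<noteq> {}" using v by blast
  then have fY: "f ` ?Y = {v}" by blast
  have vP: "v \<in> P" using v fX by blast
  have lk: "\<forall>D\<in>FF. F_linked P le D (f ` ?Y)"
    unfolding fY
  proof
    fix D assume "D \<in> FF"
    then have "D \<noteq> bot" using nb by blast
    then show "F_linked P le D {v}" by (rule single_linked[of D v P le, OF _ vP rfl])
  qed
  have sub: "?Y \<subseteq> X" by blast
  show ?thesis by (rule exI[of _ ?Y]) (intro conjI sub Y lk)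
next
  case False
  have l1: "|f ` X| \<le>o \<kappa>" using ordLeq_ordIso_trans[OF card_of_image X] .
  have l2: "\<kappa> \<le>o |f ` X|" using kap_not_small[OF card False] .
  have fXk: "|f ` X| =o \<kappa>" using l1 l2 ordIso_iff_ordLeq by blast
  obtain Z where Z: "Z \<subseteq> f ` X" "|Z| =o \<kappa>" "\<forall>D\<in>FF. F_linked P le D Z"
    using K[unfolded Kn_def, rule_format, OF conjI[OF fX fXk]] by (elim exE conjE) simp
  let ?g = "inv_into X f"
  have Y1: "?g ` Z \<subseteq> X" using Z(1) by (auto intro: inv_into_into)
  have fg: "\<forall>z\<in>Z. f (?g z) = z" using Z(1) f_inv_into_f by (metis subsetD)
  have Y2: "f ` (?g ` Z) = Z"
  proof
    show "f ` ?g ` Z \<subseteq> Z" using fg by auto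
    show "Z \<subseteq> f ` ?g ` Z"
    proof
      fix z assume z: "z \<in> Z"
      then have "z = f (?g z)" using fg by simp
      then show "z \<in> f ` ?g ` Z" using z by blast
    qed
  qed
  have inj: "inj_on ?g Z" using Z(1) inj_on_inv_into by blast
  have "|?g ` Z| =o |Z|"
    using card_of_ordIso[of Z "?g ` Z"] inj bij_betw_imageI ordIso_symmetric by blast
  then have "|?g ` Z| =o \<kappa>" using Z(2) ordIso_transitive by blast
  then show ?thesis using Y1 Y2 Z(3) by (intro exI[of _ "?g ` Z"] conjI) simp_all
qed


lemma poset_refl: "is_poset P le one \<Longrightarrow> p \<in> P \<Longrightarrow> le p p"
  unfolding is_poset_def by blast
lemma poset_top: "is_poset P le one \<Longrightarrow> p \<in> P \<Longrightarrow> le p one"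
  unfolding is_poset_def by blast
lemma poset_one: "is_poset P le one \<Longrightarrow> one \<in> P"
  unfolding is_poset_def by blast

lemma fs_prodI:
  "(\<And>i. i \<in> J \<Longrightarrow> p i \<in> P i) \<Longrightarrow> (\<And>i. i \<notin> J \<Longrightarrow> p i = one i) \<Longrightarrow> finite {i\<in>J. p i \<noteq> one i}
   \<Longrightarrow> p \<in> fs_prod J P one"
  unfolding fs_prod_def by blast
lemma fs_prodD1: "p \<in> fs_prod J P one \<Longrightarrow> i \<in> J \<Longrightarrow> p i \<in> P i"
  unfolding fs_prod_def by blast
lemma fs_prodD2: "p \<in> fs_prod J P one \<Longrightarrow> i \<notin> J \<Longrightarrow> p i = one i"
  unfolding fs_prod_def by blast
lemma fs_prodD3: "p \<in> fs_prod J P one \<Longrightarrow> finite {i\<in>J. p i \<noteq> one i}"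
  unfolding fs_prod_def by blast

lemma prod_refl:
  assumes "\<forall>i\<in>J. is_poset (P i) (le i) (one i)" and "p \<in> fs_prod J P one"
  shows "prod_le J le p p"
  unfolding prod_le_def using assms poset_refl fs_prodD1 by metis

lemma F_linked_use: "F_linked P le D Q \<Longrightarrow> \<forall>n. pbar n \<in> Q \<Longrightarrow> \<exists>q\<in>P. forces_positive P le D pbar q"
  unfolding F_linked_def by simp

definition ultra :: "nat filter \<Rightarrow> bool" where
  "ultra D \<longleftrightarrow> D \<noteq> bot \<and> (\<forall>A. eventually (\<lambda>n. n \<in> A) D \<or> eventually (\<lambda>n. n \<notin> A) D)"

lemma ultra_forces:
  assumes U: "ultra D" and fp: "forces_positive P le D pbar a" and r: "r \<in> P" and ra: "le r a"
  shows "eventually (\<lambda>n. compatible P le r (pbar n)) D"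
proof (rule ccontr)
  assume ne: "\<not> ?thesis"
  let ?C = "{n. compatible P le r (pbar n)}"
  have "\<forall>A. eventually (\<lambda>n. n \<in> A) D \<or> eventually (\<lambda>n. n \<notin> A) D"
    using U unfolding ultra_def by simp
  then have d: "eventually (\<lambda>n. n \<in> ?C) D \<or> eventually (\<lambda>n. n \<notin> ?C) D" by (rule spec)
  have "eventually (\<lambda>n. n \<notin> ?C) D" using d ne by simp
  then have "eventually (\<lambda>n. n \<in> - ?C) D" by simp
  then obtain n where "n \<in> - ?C" "compatible P le r (pbar n)"
    using fp r ra unfolding forces_positive_def by blast
  then show False by simp
qed

lemma fin_prod:
  assumes card: "Card_order \<kappa>" and reg: "regularCard \<kappa>" and unc: "natLeq <o \<kappa>"
    and J: "finite J" and posets: "\<forall>j\<in>J. is_poset (P j) (le j) (one j)"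
    and U: "\<forall>D\<in>FF. ultra D" and K: "\<forall>j\<in>J. Kn FF \<kappa> (P j) (le j)"
  shows "Kn FF \<kappa> (fs_prod J P one) (prod_le J le)"
  unfolding Kn_def
proof (intro allI impI)
  fix X assume X: "X \<subseteq> fs_prod J P one \<and> |X| =o \<kappa>"
  have X1: "X \<subseteq> fs_prod J P one" using X by simp
  have X2: "|X| =o \<kappa>" using X by simp
  have nb: "\<forall>D\<in>FF. D \<noteq> bot" using U unfolding ultra_def by blast
  have claim: "\<exists>Y\<subseteq>X. |Y| =o \<kappa> \<and> (\<forall>j\<in>K. \<forall>D\<in>FF. F_linked (P j) (le j) D ((\<lambda>p. p j) ` Y))"
    if "finite K" "K \<subseteq> J" for K
    using that
  proof (induction K rule: finite_induct)
    case empty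
    then show ?case using X2 by (intro exI[of _ X]) simp
  next
    case (insert a L)
    then have LJ: "L \<subseteq> J" by blast
    from insert.IH[OF LJ] obtain Y where Y: "Y \<subseteq> X" "|Y| =o \<kappa>" "\<forall>j\<in>L. \<forall>D\<in>FF. F_linked (P j) (le j) D ((\<lambda>p. p j) ` Y)"
      by blast
    have aJ: "a \<in> J" using insert.prems by blast
    have rfl: "\<forall>r\<in>P a. le a r r" using poset_refl[OF posets[rule_format, OF aJ]] by blast
    have sub: "(\<lambda>p. p a) ` Y \<subseteq> P a" using Y(1) X1 fs_prodD1[OF _ aJ] by blast
    obtain Y' where Y': "Y' \<subseteq> Y" "|Y'| =o \<kappa>" "\<forall>D\<in>FF. F_linked (P a) (le a) D ((\<lambda>p. p a) ` Y')"
      using K_lemma[OF card reg unc K[rule_format, OF aJ] nb rfl Y(2) sub] by (elim exE conjE) simp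
    have "\<forall>j\<in>L. \<forall>D\<in>FF. F_linked (P j) (le j) D ((\<lambda>p. p j) ` Y')"
      using Y(3) Y'(1) linked_mono image_mono by metis
    then have "\<forall>j\<in>insert a L. \<forall>D\<in>FF. F_linked (P j) (le j) D ((\<lambda>p. p j) ` Y')"
      using Y'(3) by blast
    moreover have "Y' \<subseteq> X" using Y'(1) Y(1) by blast
    ultimately show ?case using Y'(2) by (intro exI[of _ Y']) simp
  qed
  obtain Y where Y: "Y \<subseteq> X" "|Y| =o \<kappa>" "\<forall>j\<in>J. \<forall>D\<in>FF. F_linked (P j) (le j) D ((\<lambda>p. p j) ` Y)"
    using claim[OF J subset_refl] by (elim exE conjE) simp
  have "\<forall>D\<in>FF. F_linked (fs_prod J P one) (prod_le J le) D Y"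
  proof
    fix D assume D: "D \<in> FF"
    have UD: "ultra D" using U D by blast
    show "F_linked (fs_prod J P one) (prod_le J le) D Y"
      unfolding F_linked_def
    proof (intro conjI allI impI)
      show "Y \<subseteq> fs_prod J P one" using Y(1) X1 by blast
      fix pbar :: "nat \<Rightarrow> _" assume pb: "\<forall>n. pbar n \<in> Y"
      have "\<forall>j\<in>J. \<exists>a\<in>P j. forces_positive (P j) (le j) D (\<lambda>n. pbar n j) a"
      proof
        fix j assume j: "j \<in> J"
        have "F_linked (P j) (le j) D ((\<lambda>p. p j) ` Y)" using Y(3) j D by blast
        moreover have "\<forall>n. pbar n j \<in> (\<lambda>p. p j) ` Y" using pb by blast
        ultimately show "\<exists>a\<in>P j. forces_positive (P j) (le j) D (\<lambda>n. pbar n j) a"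
          by (rule F_linked_use)
      qed
      then obtain a where a: "\<forall>j\<in>J. a j \<in> P j \<and> forces_positive (P j) (le j) D (\<lambda>n. pbar n j) (a j)"
        by metis
      define q where "q = (\<lambda>i. if i \<in> J then a i else one i)"
      have q: "q \<in> fs_prod J P one"
        by (rule fs_prodI) (use a J in \<open>auto simp: q_def\<close>)
      have "forces_positive (fs_prod J P one) (prod_le J le) D pbar q"
        unfolding forces_positive_def
      proof (intro allI impI ballI)
        fix A r assume A: "eventually (\<lambda>n. n \<in> A) D" and r: "r \<in> fs_prod J P one"
          and rq: "prod_le J le r q"
        have "\<forall>j\<in>J. eventually (\<lambda>n. compatible (P j) (le j) (r j) (pbar n j)) D"
        proof
          fix j assume j: "j \<in> J"
          have "le j (r j) (a j)" using rq j unfolding prod_le_def q_def by simp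
          then show "eventually (\<lambda>n. compatible (P j) (le j) (r j) (pbar n j)) D"
            using ultra_forces[OF UD _ fs_prodD1[OF r j]] a j by blast
        qed
        then have "eventually (\<lambda>n. \<forall>j\<in>J. compatible (P j) (le j) (r j) (pbar n j)) D"
          by (rule eventually_ball_finite[OF J])
        then have "eventually (\<lambda>n. n \<in> A \<and> (\<forall>j\<in>J. compatible (P j) (le j) (r j) (pbar n j))) D"
          by (rule eventually_conj[OF A])
        moreover have "D \<noteq> bot" using UD unfolding ultra_def by simp
        ultimately obtain n where n: "n \<in> A" "\<forall>j\<in>J. compatible (P j) (le j) (r j) (pbar n j)"
          using eventually_happens' by blast
        then obtain s where s: "\<forall>j\<in>J. s j \<in> P j \<and> le j (s j) (r j) \<and> le j (s j) (pbar n j)"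
          unfolding compatible_def by metis
        define t where "t = (\<lambda>i. if i \<in> J then s i else one i)"
        have t: "t \<in> fs_prod J P one"
          by (rule fs_prodI) (use s J in \<open>auto simp: t_def\<close>)
        have "prod_le J le t r" "prod_le J le t (pbar n)"
          unfolding prod_le_def t_def using s by auto
        then have "compatible (fs_prod J P one) (prod_le J le) r (pbar n)"
          unfolding compatible_def using t by blast
        then show "\<exists>n\<in>A. compatible (fs_prod J P one) (prod_le J le) r (pbar n)" using n by blast
      qed
      then show "\<exists>q\<in>fs_prod J P one. forces_positive (fs_prod J P one) (prod_le J le) D pbar q"
        using q by blast
    qed
  qed
  then show "\<exists>Y. Y \<subseteq> X \<and> |Y| =o \<kappa> \<and> (\<forall>D\<in>FF. F_linked (fs_prod J P one) (prod_le J le) D Y)"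
    using Y by (intro exI[of _ Y]) simp
qed


lemma link:
  assumes posets: "\<forall>i\<in>I. is_poset (P i) (le i) (one i)" and D: "D \<noteq> bot"
    and Y: "Y \<subseteq> fs_prod I P one" and RI: "R \<subseteq> I"
    and ds: "dsys Y (\<lambda>p. {i\<in>I. p i \<noteq> one i}) R"
    and lk: "F_linked (fs_prod R P one) (prod_le R le) D ((\<lambda>p i. if i \<in> R then p i else one i) ` Y)"
  shows "F_linked (fs_prod I P one) (prod_le I le) D Y"
  unfolding F_linked_def
proof (intro conjI allI impI)
  show "Y \<subseteq> fs_prod I P one" using Y .
  fix pbar :: "nat \<Rightarrow> _" assume pb: "\<forall>n. pbar n \<in> Y"
  have pbI: "pbar n \<in> fs_prod I P one" for n using pb Y by blast
  show "\<exists>q\<in>fs_prod I P one. forces_positive (fs_prod I P one) (prod_le I le) D pbar q"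
  proof (cases "\<exists>v. positive D {n. pbar n = v}")
    case True
    then obtain v where v: "positive D {n. pbar n = v}" by blast
    have evU: "eventually (\<lambda>n. n \<in> (UNIV::nat set)) D" by simp
    have "{n. pbar n = v} \<inter> UNIV \<noteq> {}" using v evU unfolding positive_def by blast
    then obtain m where m: "pbar m = v" by blast
    have vI: "v \<in> fs_prod I P one" using pbI m by blast
    have "forces_positive (fs_prod I P one) (prod_le I le) D pbar v"
      unfolding forces_positive_def
    proof (intro allI impI ballI)
      fix A r assume A: "eventually (\<lambda>n. n \<in> A) D" and r: "r \<in> fs_prod I P one"
        and rv: "prod_le I le r v"
      obtain n where n: "n \<in> A" "pbar n = v" using v A unfolding positive_def by blast
      have "prod_le I le r r" using prod_refl[OF posets r] .
      then have "compatible (fs_prod I P one) (prod_le I le) r (pbar n)"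
        unfolding compatible_def using r rv n(2) by blast
      then show "\<exists>n\<in>A. compatible (fs_prod I P one) (prod_le I le) r (pbar n)" using n(1) by blast
    qed
    then show ?thesis using vI by blast
  next
    case False
    have ev: "eventually (\<lambda>n. pbar n \<noteq> v) D" for v
    proof -
      have "\<not> positive D {n. pbar n = v}" using False by blast
      then obtain A where A: "eventually (\<lambda>n. n \<in> A) D" "{n. pbar n = v} \<inter> A = {}"
        unfolding positive_def by blast
      show ?thesis using A(1) by (rule eventually_mono) (use A(2) in blast)
    qed
    define res where "res = (\<lambda>p i. if i \<in> R then p i else one i)"
    define supp where "supp = (\<lambda>p. {i\<in>I. p i \<noteq> one i})"
    have "\<forall>n. res (pbar n) \<in> res ` Y" using pb by (simp add: res_def)
    from F_linked_use[OF lk[folded res_def] this] obtain q where q: "q \<in> fs_prod R P one"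
      and fq: "forces_positive (fs_prod R P one) (prod_le R le) D (\<lambda>n. res (pbar n)) q"
      by blast
    have qI: "q \<in> fs_prod I P one"
    proof (rule fs_prodI)
      fix i assume i: "i \<in> I"
      show "q i \<in> P i"
      proof (cases "i \<in> R")
        case True then show ?thesis using fs_prodD1[OF q] by blast
      next
        case False then show ?thesis using fs_prodD2[OF q False] poset_one posets i by metis
      qed
    next
      fix i assume "i \<notin> I" then show "q i = one i" using fs_prodD2[OF q] RI by blast
    next
      have "{i\<in>I. q i \<noteq> one i} \<subseteq> {i\<in>R. q i \<noteq> one i}" using fs_prodD2[OF q] by blast
      then show "finite {i\<in>I. q i \<noteq> one i}" using fs_prodD3[OF q] finite_subset by blast
    qed
    have "forces_positive (fs_prod I P one) (prod_le I le) D pbar q"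
      unfolding forces_positive_def
    proof (intro allI impI ballI)
      fix A r assume A: "eventually (\<lambda>n. n \<in> A) D" and r: "r \<in> fs_prod I P one"
        and rq: "prod_le I le r q"
      have sr: "finite (supp r)" using fs_prodD3[OF r] by (simp add: supp_def)
      let ?B = "{p\<in>Y. (supp p - R) \<inter> supp r \<noteq> {}}"
      have one_each: "finite {p\<in>Y. i \<in> supp p - R}" for i
      proof (cases "{p\<in>Y. i \<in> supp p - R} = {}")
        case True then show ?thesis by (simp only: finite.emptyI)
      next
        case False
        then obtain p0 where p0: "p0 \<in> Y" "i \<in> supp p0 - R" by blast
        have "{p\<in>Y. i \<in> supp p - R} \<subseteq> {p0}"
          using ds p0 unfolding dsys_def supp_def by blast
        then show ?thesis using finite_subset by blast
      qed
      have "?B \<subseteq> (\<Union>i\<in>supp r. {p\<in>Y. i \<in> supp p - R})" by blast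
      moreover have "finite (\<Union>i\<in>supp r. {p\<in>Y. i \<in> supp p - R})"
        using sr one_each by blast
      ultimately have Bf: "finite ?B" using finite_subset by blast
      have "\<forall>v\<in>?B. eventually (\<lambda>n. pbar n \<noteq> v) D" using ev by blast
      then have "eventually (\<lambda>n. \<forall>v\<in>?B. pbar n \<noteq> v) D"
        by (rule eventually_ball_finite[OF Bf])
      then have "eventually (\<lambda>n. n \<in> A \<and> (\<forall>v\<in>?B. pbar n \<noteq> v)) D"
        by (rule eventually_conj[OF A])
      then have A': "eventually (\<lambda>n. n \<in> {n\<in>A. pbar n \<notin> ?B}) D"
        by (rule eventually_mono) blast
      have resr: "res r \<in> fs_prod R P one"
      proof (rule fs_prodI)
        fix i assume "i \<in> R" then show "res r i \<in> P i" using fs_prodD1[OF r] RI by (auto simp: res_def)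
      next
        fix i assume "i \<notin> R" then show "res r i = one i" by (simp add: res_def)
      next
        have "{i\<in>R. res r i \<noteq> one i} \<subseteq> {i\<in>I. r i \<noteq> one i}" using RI by (auto simp: res_def)
        then show "finite {i\<in>R. res r i \<noteq> one i}" using fs_prodD3[OF r] finite_subset by blast
      qed
      have "prod_le R le (res r) q" using rq RI unfolding prod_le_def res_def by auto
      then obtain n where n: "n \<in> A" "pbar n \<notin> ?B"
        and cn: "compatible (fs_prod R P one) (prod_le R le) (res r) (res (pbar n))"
        using fq A' resr unfolding forces_positive_def by blast
      then obtain s where s: "s \<in> fs_prod R P one" "prod_le R le s (res r)" "prod_le R le s (res (pbar n))"
        unfolding compatible_def by blast
      have pnY: "pbar n \<in> Y" using pb by blast
      have disj: "i \<in> supp r \<Longrightarrow> i \<notin> R \<Longrightarrow> pbar n i = one i" for i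
        using n(2) pnY unfolding supp_def by blast
      define t where "t = (\<lambda>i. if i \<in> R then s i else if i \<in> I \<and> r i \<noteq> one i then r i else pbar n i)"
      have t: "t \<in> fs_prod I P one"
      proof (rule fs_prodI)
        fix i assume i: "i \<in> I"
        show "t i \<in> P i" using fs_prodD1[OF s(1)] fs_prodD1[OF r i] fs_prodD1[OF pbI i]
          by (auto simp: t_def)
      next
        fix i assume i: "i \<notin> I"
        then have "i \<notin> R" using RI by blast
        then show "t i = one i" using i fs_prodD2[OF pbI i] by (simp add: t_def)
      next
        have "{i\<in>I. t i \<noteq> one i} \<subseteq> {i\<in>R. s i \<noteq> one i} \<union> {i\<in>I. r i \<noteq> one i} \<union> {i\<in>I. pbar n i \<noteq> one i}"
          by (auto simp: t_def split: if_splits)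
        moreover have "finite ({i\<in>R. s i \<noteq> one i} \<union> {i\<in>I. r i \<noteq> one i} \<union> {i\<in>I. pbar n i \<noteq> one i})"
          using fs_prodD3[OF s(1)] fs_prodD3[OF r] fs_prodD3[OF pbI] by blast
        ultimately show "finite {i\<in>I. t i \<noteq> one i}" using finite_subset by blast
      qed
      have tr: "prod_le I le t r"
        unfolding prod_le_def
      proof
        fix i assume i: "i \<in> I"
        have po: "is_poset (P i) (le i) (one i)" using posets i by blast
        show "le i (t i) (r i)"
        proof (cases "i \<in> R")
          case True
          then show ?thesis using s(2) unfolding prod_le_def res_def t_def by auto
        next
          case nR: False
          show ?thesis
          proof (cases "r i = one i")
            case True
            then show ?thesis using nR poset_top[OF po fs_prodD1[OF pbI i]] by (simp add: t_def)
          next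
            case False
            then show ?thesis using nR i poset_refl[OF po fs_prodD1[OF r i]] by (simp add: t_def)
          qed
        qed
      qed
      have tp: "prod_le I le t (pbar n)"
        unfolding prod_le_def
      proof
        fix i assume i: "i \<in> I"
        have po: "is_poset (P i) (le i) (one i)" using posets i by blast
        show "le i (t i) (pbar n i)"
        proof (cases "i \<in> R")
          case True
          then show ?thesis using s(3) unfolding prod_le_def res_def t_def by auto
        next
          case nR: False
          show ?thesis
          proof (cases "r i = one i")
            case True
            then show ?thesis using nR poset_refl[OF po fs_prodD1[OF pbI i]] by (simp add: t_def)
          next
            case False
            then have "i \<in> supp r" using i by (simp add: supp_def)
            then have "pbar n i = one i" using disj nR by blast
            then show ?thesis using nR i False poset_top[OF po fs_prodD1[OF r i]] by (simp add: t_def)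
          qed
        qed
      qed
      have "compatible (fs_prod I P one) (prod_le I le) r (pbar n)"
        unfolding compatible_def using t tr tp by blast
      then show "\<exists>n\<in>A. compatible (fs_prod I P one) (prod_le I le) r (pbar n)" using n(1) by blast
    qed
    then show ?thesis using qI by blast
  qed
qed


lemma part1:
  assumes card: "Card_order \<kappa>" and reg: "regularCard \<kappa>" and unc: "natLeq <o \<kappa>"
    and posets: "\<forall>i\<in>I. is_poset (P i) (le i) (one i)"
    and nb: "\<forall>D\<in>FF. D \<noteq> bot"
    and fin: "\<forall>J. J \<subseteq> I \<and> finite J \<longrightarrow> Kn FF \<kappa> (fs_prod J P one) (prod_le J le)"
  shows "Kn FF \<kappa> (fs_prod I P one) (prod_le I le)"
  unfolding Kn_def
proof (intro allI impI)
  fix X assume X: "X \<subseteq> fs_prod I P one \<and> |X| =o \<kappa>"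
  have X1: "X \<subseteq> fs_prod I P one" using X by simp
  have X2: "|X| =o \<kappa>" using X by simp
  have sf: "\<forall>x\<in>X. finite {i\<in>I. x i \<noteq> one i}" using X1 fs_prodD3 by blast
  obtain Y0 R0 where Y0: "Y0 \<subseteq> X" "|Y0| =o \<kappa>" "finite R0" "dsys Y0 (\<lambda>p. {i\<in>I. p i \<noteq> one i}) R0"
    using delta_system[OF card reg unc X2 sf] by (elim exE conjE) simp
  define R where "R = R0 \<inter> I"
  have RI: "R \<subseteq> I" and Rf: "finite R" using Y0(3) by (auto simp: R_def)
  have ds: "dsys Y0 (\<lambda>p. {i\<in>I. p i \<noteq> one i}) R"
    using Y0(4) unfolding dsys_def R_def by blast
  have KR: "Kn FF \<kappa> (fs_prod R P one) (prod_le R le)" using fin RI Rf by blast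
  have posR: "\<forall>i\<in>R. is_poset (P i) (le i) (one i)" using posets RI by blast
  have rfl: "\<forall>r\<in>fs_prod R P one. prod_le R le r r" using prod_refl[OF posR] by blast
  define res where "res = (\<lambda>p i. if i \<in> R then p i else one i)"
  have sub: "res ` Y0 \<subseteq> fs_prod R P one"
  proof
    fix y assume "y \<in> res ` Y0"
    then obtain p where p: "p \<in> Y0" "y = res p" by blast
    have pI: "p \<in> fs_prod I P one" using p(1) Y0(1) X1 by blast
    show "y \<in> fs_prod R P one"
    proof (rule fs_prodI)
      fix i assume "i \<in> R" then show "y i \<in> P i" using fs_prodD1[OF pI] RI p(2) by (auto simp: res_def)
    next
      fix i assume "i \<notin> R" then show "y i = one i" using p(2) by (simp add: res_def)
    next
      show "finite {i\<in>R. y i \<noteq> one i}" using Rf by simp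
    qed
  qed
  obtain Y where Y: "Y \<subseteq> Y0" "|Y| =o \<kappa>" "\<forall>D\<in>FF. F_linked (fs_prod R P one) (prod_le R le) D (res ` Y)"
    using K_lemma[OF card reg unc KR nb rfl Y0(2) sub] by (elim exE conjE) simp
  have dsY: "dsys Y (\<lambda>p. {i\<in>I. p i \<noteq> one i}) R" using dsys_mono[OF ds Y(1)] .
  have YI: "Y \<subseteq> fs_prod I P one" using Y(1) Y0(1) X1 by blast
  have "\<forall>D\<in>FF. F_linked (fs_prod I P one) (prod_le I le) D Y"
  proof
    fix D assume D: "D \<in> FF"
    have "F_linked (fs_prod R P one) (prod_le R le) D (res ` Y)" using Y(3) D by blast
    then show "F_linked (fs_prod I P one) (prod_le I le) D Y"
      using link[OF posets _ YI RI dsY] nb D unfolding res_def by blast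
  qed
  moreover have "Y \<subseteq> X" using Y(1) Y0(1) by blast
  ultimately show "\<exists>Y. Y \<subseteq> X \<and> |Y| =o \<kappa> \<and> (\<forall>D\<in>FF. F_linked (fs_prod I P one) (prod_le I le) D Y)"
    using Y(2) by (intro exI[of _ Y]) simp
qed

theorem theorem3p21:
  fixes \<kappa> :: "'k rel" and F :: "nat filter" and I :: "'i set"
    and P :: "'i \<Rightarrow> 'a set" and le :: "'i \<Rightarrow> 'a \<Rightarrow> 'a \<Rightarrow> bool" and one :: "'i \<Rightarrow> 'a"
  assumes card: "Card_order \<kappa>" and regular: "regularCard \<kappa>" and uncountable: "natLeq <o \<kappa>"
    and posets: "\<forall>i\<in>I. is_poset (P i) (le i) (one i)"
  shows
    "(F \<noteq> bot \<and> F \<le> cofinite \<and>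
       (\<forall>J. J \<subseteq> I \<and> finite J \<longrightarrow> F_Knaster \<kappa> (fs_prod J P one) (prod_le J le) F)
       \<longrightarrow> F_Knaster \<kappa> (fs_prod I P one) (prod_le I le) F)
   \<and> (nonprincipal_ultrafilter F \<and> (\<forall>i\<in>I. F_Knaster \<kappa> (P i) (le i) F)
       \<longrightarrow> F_Knaster \<kappa> (fs_prod I P one) (prod_le I le) F)
   \<and> ((\<forall>i\<in>I. uf_Knaster \<kappa> (P i) (le i))
       \<longrightarrow> uf_Knaster \<kappa> (fs_prod I P one) (prod_le I le))"
proof (intro conjI impI)
  assume H: "F \<noteq> bot \<and> F \<le> cofinite \<and>
       (\<forall>J. J \<subseteq> I \<and> finite J \<longrightarrow> F_Knaster \<kappa> (fs_prod J P one) (prod_le J le) F)"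
  have nb: "\<forall>D\<in>{F}. D \<noteq> bot" using H by simp
  have fin: "\<forall>J. J \<subseteq> I \<and> finite J \<longrightarrow> Kn {F} \<kappa> (fs_prod J P one) (prod_le J le)"
    using H by (simp add: F_Knaster_Kn)
  show "F_Knaster \<kappa> (fs_prod I P one) (prod_le I le) F"
    unfolding F_Knaster_Kn by (rule part1[OF card regular uncountable posets nb fin])
next
  assume H: "nonprincipal_ultrafilter F \<and> (\<forall>i\<in>I. F_Knaster \<kappa> (P i) (le i) F)"
  have U: "\<forall>D\<in>{F}. ultra D" using H unfolding nonprincipal_ultrafilter_def ultra_def by simp
  have nb: "\<forall>D\<in>{F}. D \<noteq> bot" using U unfolding ultra_def by simp
  have K: "\<forall>i\<in>I. Kn {F} \<kappa> (P i) (le i)" using H by (simp add: F_Knaster_Kn)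
  have fin: "\<forall>J. J \<subseteq> I \<and> finite J \<longrightarrow> Kn {F} \<kappa> (fs_prod J P one) (prod_le J le)"
  proof (intro allI impI)
    fix J assume J: "J \<subseteq> I \<and> finite J"
    have pJ: "\<forall>j\<in>J. is_poset (P j) (le j) (one j)" using posets J by blast
    have KJ: "\<forall>j\<in>J. Kn {F} \<kappa> (P j) (le j)" using K J by blast
    show "Kn {F} \<kappa> (fs_prod J P one) (prod_le J le)"
      using fin_prod[OF card regular uncountable _ pJ U KJ] J by blast
  qed
  show "F_Knaster \<kappa> (fs_prod I P one) (prod_le I le) F"
    unfolding F_Knaster_Kn by (rule part1[OF card regular uncountable posets nb fin])
next
  assume H: "\<forall>i\<in>I. uf_Knaster \<kappa> (P i) (le i)"
  let ?FF = "{D. nonprincipal_ultrafilter D}"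
  have U: "\<forall>D\<in>?FF. ultra D" unfolding nonprincipal_ultrafilter_def ultra_def by simp
  have nb: "\<forall>D\<in>?FF. D \<noteq> bot" using U unfolding ultra_def by simp
  have K: "\<forall>i\<in>I. Kn ?FF \<kappa> (P i) (le i)" using H by (simp add: uf_Knaster_Kn)
  have fin: "\<forall>J. J \<subseteq> I \<and> finite J \<longrightarrow> Kn ?FF \<kappa> (fs_prod J P one) (prod_le J le)"
  proof (intro allI impI)
    fix J assume J: "J \<subseteq> I \<and> finite J"
    have pJ: "\<forall>j\<in>J. is_poset (P j) (le j) (one j)" using posets J by blast
    have KJ: "\<forall>j\<in>J. Kn ?FF \<kappa> (P j) (le j)" using K J by blast
    show "Kn ?FF \<kappa> (fs_prod J P one) (prod_le J le)"
      using fin_prod[OF card regular uncountable _ pJ U KJ] J by blast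
  qed
  show "uf_Knaster \<kappa> (fs_prod I P one) (prod_le I le)"
    unfolding uf_Knaster_Kn by (rule part1[OF card regular uncountable posets nb fin])
qed


end
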